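(* Suppose $1/d\le\lambda\le1$, and let $L=\{0\}\subset\mathbb R^d$ and $C=\mathbb R^d_{\ge0}$ (the positive orthant). When each entry of the parameter $\theta\in\mathbb R^d$ is independently observed $\mathrm{Poi}(\lambda)$ times and each observation is corrupted by independent standard Gaussian noise, we have \[ \inf_\psi\mathcal E(\psi;L,C,\epsilon)\ge\frac12\quad\text{whenever}\quad\epsilon^2\le\frac1{16}\sqrt{\frac d\lambda}. \]
   Context: Observation model: given $\theta\in\mathbb R^d$, draw counts $\kappa_1,\dots,\kappa_d$ i.i.d. $\mathrm{Poi}(\lambda)$ and, for each $i$, $\kappa_i$ independent observations $\theta_i+g$ with $g\sim\mathcal N(0,1)$ independent; $y$ denotes the full observation and $\mathbb E_\theta$ expectation under parameter $\theta$. For $C_1\subset C_2\subset\mathbb R^d$ and $\epsilon>0$, let $\mathbb B_2(C_1;\epsilon)=\{\theta:\inf_{x\in C_1}\|\theta-x\|_2\le\epsilon\}$, and for a measurable test $\psi$ of the observations with values in $\{0,1\}$, $\mathcal E(\psi;C_1,C_2,\epsilon)=\sup_{\theta\in C_1}\mathbb E_\theta[\psi(y)]+\sup_{\theta\in C_2\setminus\mathbb B_2(C_1;\epsilon)}\mathbb E_\theta[1-\psi(y)]$. The infimum is over all such tests. *)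

theory Defs
  imports "HOL-Analysis.Analysis" "HOL-Probability.Probability"
begin

text \<open>Observation of a single coordinate: the pair (count k, sequence z), where
  z j for j < k are the k noisy observations and z j = undefined (constant) for j \<ge> k,
  so that a measurable test only sees the count and the first k observations.\<close>

definition coord_space :: "(nat \<times> (nat \<Rightarrow> real)) measure" where
  "coord_space = count_space UNIV \<Otimes>\<^sub>M (\<Pi>\<^sub>M j\<in>(UNIV::nat set). (borel :: real measure))"

definition std_gauss_shift :: "real \<Rightarrow> real measure" where
  "std_gauss_shift t = density lborel (normal_density t 1)"

definition coord_obs :: "real \<Rightarrow> real \<Rightarrow> (nat \<times> (nat \<Rightarrow> real)) measure" where
  "coord_obs lam t =
     measure_pmf (poisson_pmf lam) \<bind>
       (\<lambda>k. distr (\<Pi>\<^sub>M j\<in>{..<k}. std_gauss_shift t) coord_space (\<lambda>z. (k, z)))"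

definition obs_space :: "('n::finite \<Rightarrow> nat \<times> (nat \<Rightarrow> real)) measure" where
  "obs_space = (\<Pi>\<^sub>M i\<in>UNIV. coord_space)"

definition obs :: "real \<Rightarrow> real ^ 'n::finite \<Rightarrow> ('n \<Rightarrow> nat \<times> (nat \<Rightarrow> real)) measure" where
  "obs lam \<theta> = (\<Pi>\<^sub>M i\<in>UNIV. coord_obs lam (\<theta> $ i))"

definition is_test :: "(('n::finite \<Rightarrow> nat \<times> (nat \<Rightarrow> real)) \<Rightarrow> real) \<Rightarrow> bool" where
  "is_test \<psi> \<longleftrightarrow> \<psi> \<in> borel_measurable obs_space \<and> (\<forall>y. \<psi> y \<in> {0, 1})"

definition enlarge :: "(real ^ 'n::finite) set \<Rightarrow> real \<Rightarrow> (real ^ 'n) set" where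
  "enlarge C1 \<epsilon> = {\<theta>. (INF x\<in>C1. norm (\<theta> - x)) \<le> \<epsilon>}"

definition test_risk ::
  "real \<Rightarrow> (('n::finite \<Rightarrow> nat \<times> (nat \<Rightarrow> real)) \<Rightarrow> real) \<Rightarrow> (real ^ 'n) set \<Rightarrow> (real ^ 'n) set \<Rightarrow> real \<Rightarrow> real" where
  "test_risk lam \<psi> C1 C2 \<epsilon> =
     (SUP \<theta>\<in>C1. integral\<^sup>L (obs lam \<theta>) \<psi>)
     + (SUP \<theta>\<in>C2 - enlarge C1 \<epsilon>. integral\<^sup>L (obs lam \<theta>) (\<lambda>y. 1 - \<psi> y))"

definition minimax_risk :: "real \<Rightarrow> (real ^ 'n::finite) set \<Rightarrow> (real ^ 'n) set \<Rightarrow> real \<Rightarrow> real" where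
  "minimax_risk lam C1 C2 \<epsilon> = (INF \<psi>\<in>{\<psi>. is_test \<psi>}. test_risk lam \<psi> C1 C2 \<epsilon>)"

end

theory Submission
  imports Defs
begin

lemma G_prob: "prob_space (std_gauss_shift t)"
  unfolding std_gauss_shift_def by (rule prob_space_normal_density) simp

lemma G_sets[simp, measurable_cong]: "sets (std_gauss_shift t) = sets borel"
  unfolding std_gauss_shift_def by simp

lemma G_space[simp]: "space (std_gauss_shift t) = UNIV"
  unfolding std_gauss_shift_def by simp

lemma sets_coord_space[measurable_cong]: "sets coord_space = sets (count_space UNIV \<Otimes>\<^sub>M (\<Pi>\<^sub>M j\<in>(UNIV::nat set). (borel :: real measure)))"
  unfolding coord_space_def by simp

lemma pair_meas: "(\<lambda>z. (k, z)) \<in> measurable (\<Pi>\<^sub>M j\<in>{..<k}. std_gauss_shift t) coord_space"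
proof -
  have m: "(\<lambda>z. z) \<in> measurable (\<Pi>\<^sub>M j\<in>{..<k}. std_gauss_shift t) (\<Pi>\<^sub>M j\<in>(UNIV::nat set). (borel :: real measure))"
  proof -
    have "(\<lambda>z j. z j) \<in> measurable (\<Pi>\<^sub>M j\<in>{..<k}. std_gauss_shift t) (\<Pi>\<^sub>M j\<in>(UNIV::nat set). (borel :: real measure))"
    proof (rule measurable_PiM_single')
      fix j :: nat
      show "(\<lambda>z. z j) \<in> measurable (\<Pi>\<^sub>M j\<in>{..<k}. std_gauss_shift t) borel"
      proof (cases "j < k")
        case True
        then have "(\<lambda>z. z j) \<in> measurable (\<Pi>\<^sub>M j\<in>{..<k}. std_gauss_shift t) (std_gauss_shift t)"
          by (intro measurable_component_singleton) simp
        then show ?thesis by (simp only: measurable_cong_sets[OF refl G_sets])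
      next
        case False
        have "\<And>z. z \<in> space (\<Pi>\<^sub>M j\<in>{..<k}. std_gauss_shift t) \<Longrightarrow> z j = undefined"
          using False by (auto simp: space_PiM PiE_def extensional_def)
        then show ?thesis
          by (subst measurable_cong[where g="\<lambda>_. undefined"]) auto
      qed
    qed auto
    then show ?thesis by simp
  qed
  show ?thesis unfolding coord_space_def
    by (rule measurable_Pair[OF measurable_const m]) simp
qed

definition K :: "real \<Rightarrow> nat \<Rightarrow> (nat \<times> (nat \<Rightarrow> real)) measure" where
  "K t k = distr (\<Pi>\<^sub>M j\<in>{..<k}. std_gauss_shift t) coord_space (\<lambda>z. (k, z))"

lemma K_prob: "prob_space (K t k)"
  unfolding K_def
proof (rule prob_space.prob_space_distr)
  show "prob_space (\<Pi>\<^sub>M j\<in>{..<k}. std_gauss_shift t)"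
    by (rule prob_space_PiM) (rule G_prob)
qed (rule pair_meas)

lemma K_sets[simp]: "sets (K t k) = sets coord_space"
  unfolding K_def by simp

lemma K_meas: "K t \<in> measurable (measure_pmf p) (subprob_algebra coord_space)"
proof -
  have "K t \<in> measurable (count_space UNIV) (subprob_algebra coord_space)"
  proof -
    have "\<And>k. K t k \<in> space (subprob_algebra coord_space)"
      by (simp add: space_subprob_algebra prob_space_imp_subprob_space K_prob)
    then show ?thesis by simp
  qed
  then show ?thesis by (simp only: measurable_cong_sets[OF sets_measure_pmf_count_space refl])
qed

lemma coord_obs_K: "coord_obs lam t = measure_pmf (poisson_pmf lam) \<bind> K t"
  unfolding coord_obs_def K_def ..

lemma coord_obs_prob: "0 < lam \<Longrightarrow> prob_space (coord_obs lam t)"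
  unfolding coord_obs_K
  by (rule prob_space.prob_space_bind[OF prob_space_measure_pmf _ K_meas]) (rule AE_I2, rule K_prob)

lemma coord_obs_sets[simp, measurable_cong]: "sets (coord_obs lam t) = sets coord_space"
  unfolding coord_obs_K by (rule sets_bind) simp_all

lemma indicator_PiE_prod:
  assumes "x \<in> extensional I" "finite I"
  shows "indicator (Pi\<^sub>E I A) x = (\<Prod>i\<in>I. indicator (A i) (x i) :: ennreal)"
proof (cases "\<forall>i\<in>I. x i \<in> A i")
  case True
  then have "x \<in> Pi\<^sub>E I A" using assms by (auto simp: PiE_def)
  then show ?thesis using True by (simp add: indicator_def)
next
  case False
  then obtain i where i: "i \<in> I" "x i \<notin> A i" by auto
  then have "x \<notin> Pi\<^sub>E I A" by auto
  moreover have "(\<Prod>i\<in>I. indicator (A i) (x i) :: ennreal) = 0"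
    using i assms(2) by (intro prod_zero) (auto intro!: bexI[of _ i])
  ultimately show ?thesis by simp
qed

lemma PiM_density:
  fixes M :: "'i \<Rightarrow> 'a measure"
  assumes fin: "finite I" and sf: "\<And>i. sigma_finite_measure (M i)"
    and sfd: "\<And>i. sigma_finite_measure (density (M i) (f i))"
    and f[measurable]: "\<And>i. f i \<in> borel_measurable (M i)"
  shows "PiM I (\<lambda>i. density (M i) (f i)) = density (PiM I M) (\<lambda>x. \<Prod>i\<in>I. f i (x i))"
proof -
  interpret D: product_sigma_finite "\<lambda>i. density (M i) (f i)"
    using sfd by (simp add: product_sigma_finite_def)
  interpret M: product_sigma_finite M
    using sf by (simp add: product_sigma_finite_def)
  have gm: "(\<lambda>x. \<Prod>i\<in>I. f i (x i)) \<in> borel_measurable (PiM I M)"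
  proof (rule borel_measurable_prod_ennreal)
    fix i assume "i \<in> I"
    show "(\<lambda>x. f i (x i)) \<in> borel_measurable (PiM I M)"
      using measurable_component_singleton[OF \<open>i \<in> I\<close>, of M] f[of i] by (rule measurable_compose)
  qed
  show ?thesis
  proof (rule D.PiM_eqI[symmetric])
    show "finite I" by fact
    show "sets (density (Pi\<^sub>M I M) (\<lambda>x. \<Prod>i\<in>I. f i (x i))) = sets (Pi\<^sub>M I (\<lambda>i. density (M i) (f i)))"
    proof -
      have "sets (density (Pi\<^sub>M I M) (\<lambda>x. \<Prod>i\<in>I. f i (x i))) = sets (PiM I M)" by (rule sets_density)
      also have "\<dots> = sets (Pi\<^sub>M I (\<lambda>i. density (M i) (f i)))" by (rule sets_PiM_cong) simp_all
      finally show ?thesis .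
    qed
  next
    fix A assume A: "\<And>i. i \<in> I \<Longrightarrow> A i \<in> sets (density (M i) (f i))"
    then have A': "\<And>i. i \<in> I \<Longrightarrow> A i \<in> sets (M i)" by simp
    have box: "Pi\<^sub>E I A \<in> sets (PiM I M)"
      using A' fin by (intro sets_PiM_I_finite) auto
    have "emeasure (density (Pi\<^sub>M I M) (\<lambda>x. \<Prod>i\<in>I. f i (x i))) (Pi\<^sub>E I A)
        = (\<integral>\<^sup>+x. (\<Prod>i\<in>I. f i (x i)) * indicator (Pi\<^sub>E I A) x \<partial>PiM I M)"
      using box gm by (simp add: emeasure_density)
    also have "\<dots> = (\<integral>\<^sup>+x. (\<Prod>i\<in>I. f i (x i) * indicator (A i) (x i)) \<partial>PiM I M)"
    proof (rule nn_integral_cong)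
      fix x assume "x \<in> space (PiM I M)"
      then have "x \<in> extensional I" by (simp add: space_PiM PiE_def)
      then show "(\<Prod>i\<in>I. f i (x i)) * indicator (Pi\<^sub>E I A) x = (\<Prod>i\<in>I. f i (x i) * indicator (A i) (x i))"
        using fin by (simp add: indicator_PiE_prod prod.distrib)
    qed
    also have "\<dots> = (\<Prod>i\<in>I. \<integral>\<^sup>+y. f i y * indicator (A i) y \<partial>M i)"
    proof (rule M.product_nn_integral_prod[OF fin])
      fix i assume "i \<in> I"
      then have [measurable]: "A i \<in> sets (M i)" by (rule A')
      show "(\<lambda>y. f i y * indicator (A i) y) \<in> borel_measurable (M i)" by measurable
    qed
    also have "\<dots> = (\<Prod>i\<in>I. emeasure (density (M i) (f i)) (A i))"
    proof (rule prod.cong[OF refl])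
      fix i assume "i \<in> I"
      then have [measurable]: "A i \<in> sets (M i)" by (rule A')
      show "(\<integral>\<^sup>+y. f i y * indicator (A i) y \<partial>M i) = emeasure (density (M i) (f i)) (A i)"
        by (simp add: emeasure_density)
    qed
    finally show "emeasure (density (Pi\<^sub>M I M) (\<lambda>x. \<Prod>i\<in>I. f i (x i))) (Pi\<^sub>E I A) = (\<Prod>i\<in>I. emeasure (density (M i) (f i)) (A i))" .
  qed
qed

definition ell :: "real \<Rightarrow> nat \<times> (nat \<Rightarrow> real) \<Rightarrow> real" where
  "ell t y = (\<Prod>j<fst y. exp (t * snd y j - t^2/2))"

lemma ell_pos: "0 < ell t y"
  unfolding ell_def by (intro prod_pos) simp

lemma ell_nonneg: "0 \<le> ell t y"
  using ell_pos[of t y] by simp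

lemma ell_meas: "ell t \<in> borel_measurable coord_space"
proof -
  have "ell t \<in> borel_measurable (count_space UNIV \<Otimes>\<^sub>M (\<Pi>\<^sub>M j\<in>(UNIV::nat set). (borel :: real measure)))"
  proof (rule measurable_pair_measure_countable1)
    fix k :: nat
    show "(\<lambda>z. ell t (k, z)) \<in> borel_measurable (\<Pi>\<^sub>M j\<in>(UNIV::nat set). (borel :: real measure))"
      unfolding ell_def by simp measurable
  qed simp
  then show ?thesis by (simp only: measurable_cong_sets[OF sets_coord_space refl])
qed

lemma ell_meas_Q[measurable]: "ell t \<in> borel_measurable (coord_obs lam s)"
  using ell_meas by (simp only: measurable_cong_sets[OF coord_obs_sets refl])

lemma ell_meas_K[measurable]: "ell t \<in> borel_measurable (K s k)"
  using ell_meas by (simp only: measurable_cong_sets[OF K_sets refl])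

lemma nd_shift: "normal_density 0 1 x * exp (t*x - t^2/2) = normal_density t 1 x"
proof -
  have "exp (-(x - 0)\<^sup>2 / (2 * 1\<^sup>2)) * exp (t*x - t^2/2) = exp (-(x - t)\<^sup>2 / (2 * 1\<^sup>2))"
    by (simp add: exp_add[symmetric] power2_diff field_simps)
  then show ?thesis unfolding normal_density_def by (simp add: mult.assoc)
qed

lemma G_density: "std_gauss_shift t = density (std_gauss_shift 0) (\<lambda>x. ennreal (exp (t*x - t^2/2)))"
proof -
  have "density (std_gauss_shift 0) (\<lambda>x. ennreal (exp (t*x - t^2/2)))
      = density lborel (\<lambda>x. ennreal (normal_density 0 1 x) * ennreal (exp (t*x - t^2/2)))"
    unfolding std_gauss_shift_def by (rule density_density_eq) measurable
  also have "\<dots> = density lborel (\<lambda>x. ennreal (normal_density t 1 x))"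
    by (rule density_cong) (auto simp: ennreal_mult[symmetric] nd_shift)
  finally show ?thesis unfolding std_gauss_shift_def by simp
qed

lemma GB_density:
  fixes k :: nat
  shows "(\<Pi>\<^sub>M j\<in>{..<k}. std_gauss_shift t)
     = density (\<Pi>\<^sub>M j\<in>{..<k}. std_gauss_shift 0) (\<lambda>z. ennreal (\<Prod>j<k. exp (t * z j - t^2/2)))"
proof -
  have "(\<Pi>\<^sub>M j\<in>{..<k}. std_gauss_shift t)
      = (\<Pi>\<^sub>M j\<in>{..<k}. density (std_gauss_shift 0) (\<lambda>x. ennreal (exp (t*x - t^2/2))))"
    by (rule arg_cong[where f="PiM {..<k}"]) (rule ext, rule G_density)
  also have "\<dots> = density (\<Pi>\<^sub>M j\<in>{..<k}. std_gauss_shift 0) (\<lambda>z. \<Prod>j<k. ennreal (exp (t * z j - t^2/2)))"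
  proof (rule PiM_density)
    show "finite {..<k}" by simp
    show "sigma_finite_measure (std_gauss_shift 0)" for i :: nat
      by (rule prob_space_imp_sigma_finite[OF G_prob])
    show "sigma_finite_measure (density (std_gauss_shift 0) (\<lambda>x. ennreal (exp (t*x - t^2/2))))" for i :: nat
      using prob_space_imp_sigma_finite[OF G_prob[of t]] by (simp only: G_density[of t, symmetric])
    show "(\<lambda>x. ennreal (exp (t*x - t^2/2))) \<in> borel_measurable (std_gauss_shift 0)" for i :: nat
      by measurable
  qed
  also have "\<dots> = density (\<Pi>\<^sub>M j\<in>{..<k}. std_gauss_shift 0) (\<lambda>z. ennreal (\<Prod>j<k. exp (t * z j - t^2/2)))"
    by (simp add: prod_ennreal)
  finally show ?thesis .
qed

lemma K_density: "K t k = density (K 0 k) (\<lambda>y. ennreal (ell t y))"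
proof -
  have m: "(\<lambda>y. ennreal (ell t y)) \<in> borel_measurable coord_space"
    using ell_meas by measurable
  have "density (K 0 k) (\<lambda>y. ennreal (ell t y))
      = distr (density (\<Pi>\<^sub>M j\<in>{..<k}. std_gauss_shift 0) (\<lambda>z. ennreal (ell t (k, z)))) coord_space (\<lambda>z. (k, z))"
    unfolding K_def by (rule density_distr[OF m pair_meas])
  also have "(\<lambda>z. ennreal (ell t (k, z))) = (\<lambda>z. ennreal (\<Prod>j<k. exp (t * z j - t^2/2)))"
    by (simp add: ell_def)
  also have "density (\<Pi>\<^sub>M j\<in>{..<k}. std_gauss_shift 0) \<dots> = (\<Pi>\<^sub>M j\<in>{..<k}. std_gauss_shift t)"
    by (rule GB_density[symmetric])
  finally show ?thesis unfolding K_def by simp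
qed

lemma Q_density:
  assumes lam: "0 < lam"
  shows "coord_obs lam t = density (coord_obs lam 0) (\<lambda>y. ennreal (ell t y))"
proof (rule measure_eqI)
  show "sets (coord_obs lam t) = sets (density (coord_obs lam 0) (\<lambda>y. ennreal (ell t y)))"
    by simp
next
  fix A assume "A \<in> sets (coord_obs lam t)"
  then have A[measurable]: "A \<in> sets coord_space" by simp
  have "emeasure (coord_obs lam t) A = (\<integral>\<^sup>+k. emeasure (K t k) A \<partial>measure_pmf (poisson_pmf lam))"
    unfolding coord_obs_K by (rule emeasure_bind[OF _ K_meas A]) simp
  also have "\<dots> = (\<integral>\<^sup>+k. (\<integral>\<^sup>+y. ennreal (ell t y) * indicator A y \<partial>K 0 k) \<partial>measure_pmf (poisson_pmf lam))"
    by (rule nn_integral_cong) (simp add: K_density[of t] emeasure_density)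
  also have "\<dots> = (\<integral>\<^sup>+y. ennreal (ell t y) * indicator A y \<partial>coord_obs lam 0)"
    unfolding coord_obs_K
    by (rule nn_integral_bind[symmetric, OF _ K_meas]) (use ell_meas in measurable)
  also have "\<dots> = emeasure (density (coord_obs lam 0) (\<lambda>y. ennreal (ell t y))) A"
    by (simp add: emeasure_density)
  finally show "emeasure (coord_obs lam t) A = emeasure (density (coord_obs lam 0) (\<lambda>y. ennreal (ell t y))) A" .
qed

definition LR :: "real ^ 'n::finite \<Rightarrow> ('n \<Rightarrow> nat \<times> (nat \<Rightarrow> real)) \<Rightarrow> real" where
  "LR \<theta> y = (\<Prod>i\<in>UNIV. ell (\<theta> $ i) (y i))"

lemma obs_sets[simp, measurable_cong]: "sets (obs lam \<theta>) = sets (obs_space :: ('n::finite \<Rightarrow> _) measure)"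
  unfolding obs_def obs_space_def by (rule sets_PiM_cong) simp_all

lemma obs_prob: "0 < lam \<Longrightarrow> prob_space (obs lam \<theta>)"
  unfolding obs_def by (rule prob_space_PiM) (rule coord_obs_prob)

lemma LR_meas[measurable]: "LR (\<theta> :: real ^ 'n::finite) \<in> borel_measurable (obs lam \<theta>')"
  unfolding LR_def obs_def
proof (rule borel_measurable_prod)
  fix i :: 'n
  show "(\<lambda>x. ell (\<theta> $ i) (x i)) \<in> borel_measurable (Pi\<^sub>M UNIV (\<lambda>i. coord_obs lam (\<theta>' $ i)))"
    using measurable_component_singleton[of i UNIV "\<lambda>i. coord_obs lam (\<theta>' $ i)"] ell_meas_Q
    by (rule measurable_compose) simp
qed

lemma P_density:
  fixes \<theta> :: "real ^ 'n::finite"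
  assumes lam: "0 < lam"
  shows "obs lam \<theta> = density (obs lam 0) (\<lambda>y. ennreal (LR \<theta> y))"
proof -
  have "obs lam \<theta> = (\<Pi>\<^sub>M i\<in>UNIV. density (coord_obs lam 0) (\<lambda>y. ennreal (ell (\<theta> $ i) y)))"
    unfolding obs_def by (rule arg_cong[where f="PiM UNIV"]) (rule ext, rule Q_density[OF lam])
  also have "\<dots> = density (\<Pi>\<^sub>M i\<in>UNIV. coord_obs lam 0) (\<lambda>y. \<Prod>i\<in>UNIV. ennreal (ell (\<theta> $ i) (y i)))"
  proof (rule PiM_density)
    show "finite (UNIV :: 'n set)" by simp
    show "sigma_finite_measure (coord_obs lam 0)" for i :: 'n
      by (rule prob_space_imp_sigma_finite[OF coord_obs_prob[OF lam]])
    show "sigma_finite_measure (density (coord_obs lam 0) (\<lambda>y. ennreal (ell (\<theta> $ i) y)))" for i :: 'n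
      using prob_space_imp_sigma_finite[OF coord_obs_prob[OF lam, of "\<theta> $ i"]]
      by (simp only: Q_density[OF lam, of "\<theta> $ i", symmetric])
    show "(\<lambda>y. ennreal (ell (\<theta> $ i) y)) \<in> borel_measurable (coord_obs lam 0)" for i :: 'n
      by measurable
  qed
  also have "\<dots> = density (obs lam 0) (\<lambda>y. ennreal (LR \<theta> y))"
    unfolding obs_def LR_def by (simp add: prod_ennreal ell_nonneg)
  finally show ?thesis .
qed

lemma ell_mult: "ell a y * ell b y = exp (real (fst y) * (a*b)) * ell (a+b) y"
proof -
  have "ell a y * ell b y = (\<Prod>j<fst y. exp (a * snd y j - a^2/2) * exp (b * snd y j - b^2/2))"
    unfolding ell_def by (simp add: prod.distrib)
  also have "\<dots> = (\<Prod>j<fst y. exp (a*b) * exp ((a+b) * snd y j - (a+b)^2/2))"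
  proof (rule prod.cong[OF refl])
    fix j
    have "a * snd y j - a^2/2 + (b * snd y j - b^2/2) = a*b + ((a+b) * snd y j - (a+b)^2/2)"
      by (simp add: power2_eq_square algebra_simps)
    then show "exp (a * snd y j - a^2/2) * exp (b * snd y j - b^2/2) = exp (a*b) * exp ((a+b) * snd y j - (a+b)^2/2)"
      by (simp add: mult_exp_exp)
  qed
  also have "\<dots> = exp (a*b) ^ fst y * ell (a+b) y"
    unfolding ell_def by (simp add: prod.distrib)
  also have "exp (a*b) ^ fst y = exp (real (fst y) * (a*b))"
    by (simp add: exp_of_nat_mult)
  finally show ?thesis .
qed

lemma int_K: "(\<integral>\<^sup>+y. ennreal (ell c y) \<partial>K 0 k) = 1"
proof -
  have sp: "space (K 0 k) = space (K c k)"
    by (rule sets_eq_imp_space_eq) simp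
  have "(\<integral>\<^sup>+y. ennreal (ell c y) \<partial>K 0 k) = (\<integral>\<^sup>+y. ennreal (ell c y) * indicator (space (K 0 k)) y \<partial>K 0 k)"
    by (rule nn_integral_cong) simp
  also have "\<dots> = emeasure (density (K 0 k) (\<lambda>y. ennreal (ell c y))) (space (K 0 k))"
  proof (rule emeasure_density[symmetric])
    show "space (K 0 k) \<in> sets (K 0 k)" by (rule sets.top)
  qed simp
  also have "\<dots> = emeasure (K c k) (space (K c k))"
    using sp by (simp only: K_density[of c k, symmetric])
  also have "\<dots> = 1"
    by (rule prob_space.emeasure_space_1[OF K_prob])
  finally show ?thesis .
qed

lemma poisson_mgf:
  assumes lam: "0 < lam"
  shows "(\<integral>\<^sup>+k. ennreal (exp (real k * c)) \<partial>measure_pmf (poisson_pmf lam)) = ennreal (exp (lam * (exp c - 1)))"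
proof -
  define g where "g k = exp (-lam) * ((lam * exp c) ^ k / fact k)" for k :: nat
  have g_nn: "0 \<le> g k" for k
    unfolding g_def using lam by simp
  have sums: "g sums (exp (-lam) * exp (lam * exp c))"
    unfolding g_def
    by (rule sums_mult) (use exp_converges[of "lam * exp c"] in \<open>simp add: divide_inverse mult.commute\<close>)
  have eq: "ennreal (pmf (poisson_pmf lam) k) * ennreal (exp (real k * c)) = ennreal (g k)" for k
  proof -
    have "pmf (poisson_pmf lam) k * exp (real k * c) = g k"
      unfolding g_def pmf_poisson[OF lam] exp_of_nat_mult
      by (simp add: power_mult_distrib field_simps)
    then show ?thesis using lam by (simp add: ennreal_mult[symmetric])
  qed
  have "(\<integral>\<^sup>+k. ennreal (exp (real k * c)) \<partial>measure_pmf (poisson_pmf lam))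
      = (\<integral>\<^sup>+k. ennreal (pmf (poisson_pmf lam) k) * ennreal (exp (real k * c)) \<partial>count_space UNIV)"
    by (rule nn_integral_measure_pmf)
  also have "\<dots> = (\<Sum>k. ennreal (g k))"
    by (simp add: eq nn_integral_count_space_nat)
  also have "\<dots> = ennreal (\<Sum>k. g k)"
    by (rule suminf_ennreal2[OF g_nn sums_summable[OF sums]])
  also have "(\<Sum>k. g k) = exp (-lam) * exp (lam * exp c)"
    using sums by (rule sums_unique[symmetric])
  also have "\<dots> = exp (lam * (exp c - 1))"
    by (simp add: mult_exp_exp algebra_simps)
  finally show ?thesis .
qed

lemma int_Q:
  assumes lam: "0 < lam"
  shows "(\<integral>\<^sup>+y. ennreal (ell a y * ell b y) \<partial>coord_obs lam 0) = ennreal (exp (lam * (exp (a*b) - 1)))"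
proof -
  have m2: "(\<lambda>y. ennreal (ell a y * ell b y)) \<in> borel_measurable coord_space"
    using ell_meas[of a] ell_meas[of b] by measurable
  have "(\<integral>\<^sup>+y. ennreal (ell a y * ell b y) \<partial>coord_obs lam 0)
      = (\<integral>\<^sup>+k. (\<integral>\<^sup>+y. ennreal (ell a y * ell b y) \<partial>K 0 k) \<partial>measure_pmf (poisson_pmf lam))"
    unfolding coord_obs_K by (rule nn_integral_bind[OF m2 K_meas])
  also have "\<dots> = (\<integral>\<^sup>+k. ennreal (exp (real k * (a*b))) \<partial>measure_pmf (poisson_pmf lam))"
  proof (rule nn_integral_cong)
    fix k :: nat
    have mc: "(\<lambda>z. ennreal (ell (a+b) (k, z))) \<in> borel_measurable (\<Pi>\<^sub>M j\<in>{..<k}. std_gauss_shift 0)"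
      using measurable_compose[OF pair_meas ell_meas] by measurable
    have m2': "(\<lambda>y. ennreal (ell a y * ell b y)) \<in> borel_measurable (distr (\<Pi>\<^sub>M j\<in>{..<k}. std_gauss_shift 0) coord_space (\<lambda>z. (k, z)))"
      using m2 by (simp only: measurable_cong_sets[OF sets_distr refl])
    have m1': "(\<lambda>y. ennreal (ell (a+b) y)) \<in> borel_measurable (distr (\<Pi>\<^sub>M j\<in>{..<k}. std_gauss_shift 0) coord_space (\<lambda>z. (k, z)))"
      using ell_meas[of "a+b"] by (simp only: measurable_cong_sets[OF sets_distr refl]) measurable
    have "(\<integral>\<^sup>+y. ennreal (ell a y * ell b y) \<partial>K 0 k)
        = (\<integral>\<^sup>+z. ennreal (ell a (k, z) * ell b (k, z)) \<partial>(\<Pi>\<^sub>M j\<in>{..<k}. std_gauss_shift 0))"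
      unfolding K_def by (rule nn_integral_distr[OF pair_meas m2'])
    also have "\<dots> = (\<integral>\<^sup>+z. ennreal (exp (real k * (a*b))) * ennreal (ell (a+b) (k, z)) \<partial>(\<Pi>\<^sub>M j\<in>{..<k}. std_gauss_shift 0))"
      by (rule nn_integral_cong) (simp add: ell_mult ennreal_mult ell_nonneg)
    also have "\<dots> = ennreal (exp (real k * (a*b))) * (\<integral>\<^sup>+z. ennreal (ell (a+b) (k, z)) \<partial>(\<Pi>\<^sub>M j\<in>{..<k}. std_gauss_shift 0))"
      by (rule nn_integral_cmult[OF mc])
    also have "(\<integral>\<^sup>+z. ennreal (ell (a+b) (k, z)) \<partial>(\<Pi>\<^sub>M j\<in>{..<k}. std_gauss_shift 0)) = (\<integral>\<^sup>+y. ennreal (ell (a+b) y) \<partial>K 0 k)"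
      unfolding K_def by (rule nn_integral_distr[OF pair_meas m1', symmetric])
    also have "\<dots> = 1" by (rule int_K)
    finally show "(\<integral>\<^sup>+y. ennreal (ell a y * ell b y) \<partial>K 0 k) = ennreal (exp (real k * (a*b)))" by simp
  qed
  also have "\<dots> = ennreal (exp (lam * (exp (a*b) - 1)))"
    by (rule poisson_mgf[OF lam])
  finally show ?thesis .
qed

lemma int_P:
  fixes \<theta> \<theta>' :: "real ^ 'n::finite"
  assumes lam: "0 < lam"
  shows "(\<integral>\<^sup>+y. ennreal (LR \<theta> y * LR \<theta>' y) \<partial>obs lam 0) = ennreal (\<Prod>i\<in>UNIV. exp (lam * (exp (\<theta>$i * \<theta>'$i) - 1)))"
proof -
  interpret PS: product_sigma_finite "\<lambda>i::'n. coord_obs lam 0"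
    using prob_space_imp_sigma_finite[OF coord_obs_prob[OF lam]] by (simp add: product_sigma_finite_def)
  have o: "obs lam (0 :: real ^ 'n) = (\<Pi>\<^sub>M i\<in>UNIV. coord_obs lam 0)"
    unfolding obs_def by simp
  have "(\<integral>\<^sup>+y. ennreal (LR \<theta> y * LR \<theta>' y) \<partial>obs lam 0)
      = (\<integral>\<^sup>+y. (\<Prod>i\<in>UNIV. ennreal (ell (\<theta>$i) (y i) * ell (\<theta>'$i) (y i))) \<partial>(\<Pi>\<^sub>M i\<in>UNIV. coord_obs lam 0))"
    unfolding o LR_def
    by (rule nn_integral_cong) (simp add: prod_ennreal ell_nonneg prod.distrib)
  also have "\<dots> = (\<Prod>i\<in>UNIV. (\<integral>\<^sup>+x. ennreal (ell (\<theta>$i) x * ell (\<theta>'$i) x) \<partial>coord_obs lam 0))"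
  proof (rule PS.product_nn_integral_prod)
    fix i :: 'n
    show "(\<lambda>x. ennreal (ell (\<theta>$i) x * ell (\<theta>'$i) x)) \<in> borel_measurable (coord_obs lam 0)"
      by measurable
  qed simp
  also have "\<dots> = (\<Prod>i\<in>UNIV. ennreal (exp (lam * (exp (\<theta>$i * \<theta>'$i) - 1))))"
    by (simp add: int_Q[OF lam])
  also have "\<dots> = ennreal (\<Prod>i\<in>UNIV. exp (lam * (exp (\<theta>$i * \<theta>'$i) - 1)))"
    by (simp add: prod_ennreal)
  finally show ?thesis .
qed

lemma pointwise_ineq:
  fixes p L :: real
  assumes "0 \<le> p" "p \<le> 1" "0 \<le> L"
  shows "p * L + 2 * L \<le> p + L^2 + 5/4"
proof (cases "L \<ge> 1")
  case True
  have "p * (L - 1) \<le> L - 1" using assms True by (simp add: mult_left_le_one_le)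
  moreover have "L - 1 \<le> (L - 1)^2 + 1/4"
    using zero_le_power2[of "L - 3/2"] by (simp add: power2_eq_square algebra_simps)
  ultimately show ?thesis by (simp add: power2_eq_square algebra_simps)
next
  case False
  then have "p * (L - 1) \<le> 0" using assms by (simp add: mult_nonneg_nonpos)
  moreover have "0 \<le> (L - 1)^2" by simp
  ultimately show ?thesis by (simp add: power2_eq_square algebra_simps)
qed

lemma LR_nonneg: "0 \<le> LR \<theta> y"
  unfolding LR_def by (intro prod_nonneg) (simp add: ell_nonneg)

lemma LR_nn_int:
  fixes \<theta> :: "real ^ 'n::finite"
  assumes lam: "0 < lam"
  shows "(\<integral>\<^sup>+y. ennreal (LR \<theta> y) \<partial>obs lam 0) = ennreal 1"
proof -
  have sp: "space (obs lam (0::real^'n)) = space (obs lam \<theta>)"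
    by (rule sets_eq_imp_space_eq) simp
  have "(\<integral>\<^sup>+y. ennreal (LR \<theta> y) \<partial>obs lam 0) = (\<integral>\<^sup>+y. ennreal (LR \<theta> y) * indicator (space (obs lam (0::real^'n))) y \<partial>obs lam 0)"
    by (rule nn_integral_cong) simp
  also have "\<dots> = emeasure (density (obs lam 0) (\<lambda>y. ennreal (LR \<theta> y))) (space (obs lam (0::real^'n)))"
  proof (rule emeasure_density[symmetric])
    show "space (obs lam (0::real^'n)) \<in> sets (obs lam 0)" by (rule sets.top)
  qed simp
  also have "\<dots> = emeasure (obs lam \<theta>) (space (obs lam \<theta>))"
    using sp by (simp only: P_density[OF lam, of \<theta>, symmetric])
  also have "\<dots> = 1"
    by (rule prob_space.emeasure_space_1[OF obs_prob[OF lam]])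
  finally show ?thesis by simp
qed

lemma test_bound:
  fixes \<theta> :: "'f \<Rightarrow> real ^ 'n::finite" and \<psi> :: "('n \<Rightarrow> nat \<times> (nat \<Rightarrow> real)) \<Rightarrow> real"
  assumes lam: "0 < lam" and F: "finite F" "F \<noteq> {}"
    and psim: "\<psi> \<in> borel_measurable obs_space" and psi0: "\<And>y. 0 \<le> \<psi> y" and psi1: "\<And>y. \<psi> y \<le> 1"
    and chi: "(\<integral>\<^sup>+y. ennreal ((\<Sum>f\<in>F. LR (\<theta> f) y / card F)^2) \<partial>obs lam 0) \<le> ennreal (5/4)"
  shows "(\<Sum>f\<in>F. (\<integral>y. \<psi> y \<partial>obs lam (\<theta> f)) / card F) \<le> (\<integral>y. \<psi> y \<partial>obs lam 0) + 1/2"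
proof -
  let ?P = "obs lam (0::real^'n)"
  interpret P: prob_space ?P by (rule obs_prob[OF lam])
  define Lb where "Lb y = (\<Sum>f\<in>F. LR (\<theta> f) y / card F)" for y
  have [measurable]: "\<psi> \<in> borel_measurable ?P"
    using psim by (simp only: measurable_cong_sets[OF obs_sets refl])
  have LRm[measurable]: "LR \<theta>' \<in> borel_measurable ?P" for \<theta>' :: "real^'n" by (rule LR_meas)
  have Lbm[measurable]: "Lb \<in> borel_measurable ?P" unfolding Lb_def by measurable
  have LRi: "integrable ?P (LR \<theta>')" for \<theta>' :: "real^'n"
    by (rule integrableI_nn_integral_finite[OF LRm _ LR_nn_int[OF lam]]) (simp add: LR_nonneg)
  have LR1: "(\<integral>y. LR \<theta>' y \<partial>?P) = 1" for \<theta>' :: "real^'n"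
    using integral_eq_nn_integral[OF LRm, of \<theta>'] LR_nn_int[OF lam, of \<theta>'] by (simp add: LR_nonneg)
  have Lbi: "integrable ?P Lb" unfolding Lb_def using LRi by simp
  have Lb_nn: "0 \<le> Lb y" for y unfolding Lb_def by (intro sum_nonneg divide_nonneg_nonneg LR_nonneg) simp
  have Lb1: "(\<integral>y. Lb y \<partial>?P) = 1"
  proof -
    have "(\<integral>y. Lb y \<partial>?P) = (\<Sum>f\<in>F. (\<integral>y. LR (\<theta> f) y \<partial>?P) / card F)"
      unfolding Lb_def using LRi by (simp add: integral_sum)
    also have "\<dots> = (\<Sum>f\<in>F. 1 / card F)" by (simp add: LR1)
    also have "\<dots> = 1" using F by simp
    finally show ?thesis .
  qed
  have Lb2m[measurable]: "(\<lambda>y. (Lb y)^2) \<in> borel_measurable ?P" by measurable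
  have Lb2nn: "(\<integral>\<^sup>+y. ennreal ((Lb y)^2) \<partial>?P) \<le> ennreal (5/4)"
    using chi unfolding Lb_def .
  have Lb2i: "integrable ?P (\<lambda>y. (Lb y)^2)"
  proof (rule integrableI_bounded[OF Lb2m])
    have "(\<integral>\<^sup>+y. ennreal (norm ((Lb y)^2)) \<partial>?P) = (\<integral>\<^sup>+y. ennreal ((Lb y)^2) \<partial>?P)" by simp
    also have "\<dots> < \<infinity>" using Lb2nn by (rule le_less_trans) simp
    finally show "(\<integral>\<^sup>+y. ennreal (norm ((Lb y)^2)) \<partial>?P) < \<infinity>" .
  qed
  have Lb2: "(\<integral>y. (Lb y)^2 \<partial>?P) \<le> 5/4"
  proof -
    have "ennreal (\<integral>y. (Lb y)^2 \<partial>?P) = (\<integral>\<^sup>+y. ennreal ((Lb y)^2) \<partial>?P)"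
      by (rule nn_integral_eq_integral[OF Lb2i, symmetric]) simp
    then have "ennreal (\<integral>y. (Lb y)^2 \<partial>?P) \<le> ennreal (5/4)" using Lb2nn by simp
    then show ?thesis by (simp add: ennreal_le_iff)
  qed
  have psii: "integrable ?P \<psi>"
    by (rule P.integrable_const_bound[where B=1]) (use psi0 psi1 in auto)
  have LRpsii: "integrable ?P (\<lambda>y. LR \<theta>' y * \<psi> y)" for \<theta>' :: "real^'n"
  proof (rule Bochner_Integration.integrable_bound[OF LRi[of \<theta>']])
    show "AE x in ?P. norm (LR \<theta>' x * \<psi> x) \<le> norm (LR \<theta>' x)"
    proof (rule AE_I2)
      fix x
      have "LR \<theta>' x * \<psi> x \<le> LR \<theta>' x" using psi1[of x] LR_nonneg[of \<theta>' x] by (simp add: mult_left_le)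
      then show "norm (LR \<theta>' x * \<psi> x) \<le> norm (LR \<theta>' x)"
        using psi0[of x] LR_nonneg[of \<theta>' x] by simp
    qed
  qed simp
  have Eth: "(\<integral>y. \<psi> y \<partial>obs lam \<theta>') = (\<integral>y. LR \<theta>' y * \<psi> y \<partial>?P)" for \<theta>' :: "real^'n"
  proof -
    have "(\<integral>y. \<psi> y \<partial>obs lam \<theta>') = (\<integral>y. \<psi> y \<partial>density ?P (\<lambda>y. ennreal (LR \<theta>' y)))"
      by (simp only: P_density[OF lam, of \<theta>', symmetric])
    also have "\<dots> = (\<integral>y. LR \<theta>' y *\<^sub>R \<psi> y \<partial>?P)"
      by (rule integral_density) (simp_all add: LR_nonneg)
    finally show ?thesis by simp
  qed
  have "(\<Sum>f\<in>F. (\<integral>y. \<psi> y \<partial>obs lam (\<theta> f)) / card F) = (\<Sum>f\<in>F. (\<integral>y. LR (\<theta> f) y * \<psi> y \<partial>?P) / card F)"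
    by (simp add: Eth)
  also have "\<dots> = (\<integral>y. \<psi> y * Lb y \<partial>?P)"
  proof -
    have "(\<lambda>y. \<psi> y * Lb y) = (\<lambda>y. \<Sum>f\<in>F. LR (\<theta> f) y * \<psi> y / card F)"
      unfolding Lb_def by (simp add: sum_distrib_left mult.commute)
    then show ?thesis using LRpsii by (simp add: integral_sum)
  qed
  finally have E: "(\<Sum>f\<in>F. (\<integral>y. \<psi> y \<partial>obs lam (\<theta> f)) / card F) = (\<integral>y. \<psi> y * Lb y \<partial>?P)" .
  have psiLbi: "integrable ?P (\<lambda>y. \<psi> y * Lb y)"
  proof -
    have "(\<lambda>y. \<psi> y * Lb y) = (\<lambda>y. \<Sum>f\<in>F. LR (\<theta> f) y * \<psi> y / card F)"
      unfolding Lb_def by (simp add: sum_distrib_left mult.commute)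
    then show ?thesis using LRpsii by simp
  qed
  have "(\<integral>y. \<psi> y * Lb y + 2 * Lb y \<partial>?P) \<le> (\<integral>y. \<psi> y + (Lb y)^2 + 5/4 \<partial>?P)"
    by (rule integral_mono) (use psiLbi Lbi psii Lb2i pointwise_ineq psi0 psi1 Lb_nn in auto)
  moreover have "(\<integral>y. \<psi> y * Lb y + 2 * Lb y \<partial>?P) = (\<integral>y. \<psi> y * Lb y \<partial>?P) + 2 * (\<integral>y. Lb y \<partial>?P)"
    using psiLbi Lbi by simp
  moreover have "(\<integral>y. \<psi> y + (Lb y)^2 + 5/4 \<partial>?P) = (\<integral>y. \<psi> y \<partial>?P) + (\<integral>y. (Lb y)^2 \<partial>?P) + 5/4"
    using psii Lb2i by (simp add: P.prob_space)
  ultimately show ?thesis using E Lb1 Lb2 by linarith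
qed

lemma exp_convex_bound:
  fixes x y :: real
  assumes "0 \<le> x" "x \<le> 1"
  shows "exp (x*y) - 1 \<le> x * (exp y - 1)"
proof -
  have "exp ((1 - x) *\<^sub>R 0 + x *\<^sub>R y) \<le> (1 - x) * exp 0 + x * exp y"
    by (rule convex_onD[OF exp_convex]) (use assms in auto)
  then show ?thesis by (simp add: algebra_simps)
qed

lemma exp_le_inv:
  fixes x :: real
  assumes "x < 1"
  shows "exp x \<le> 1 / (1 - x)"
proof -
  have "1 - x \<le> exp (-x)" using exp_ge_add_one_self[of "-x"] by simp
  then have "(1 - x) * exp x \<le> exp (-x) * exp x" by (simp add: mult_right_mono)
  then have "(1 - x) * exp x \<le> 1" by (simp add: exp_minus_inverse mult.commute)
  then show ?thesis using assms by (simp add: field_simps)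
qed

lemma e_le: "exp (1::real) \<le> 272/100"
  using e_less_272 by simp

lemma exp_74: "exp (7/4::real) \<le> 645/100"
proof -
  have q: "exp (1/4::real) \<le> 4/3" using exp_le_inv[of "1/4"] by simp
  have "exp (7/4::real) = exp 1 * exp (1/4) ^ 3"
    by (simp add: exp_of_nat_mult[symmetric] mult_exp_exp)
  also have "\<dots> \<le> (272/100) * (4/3)^3"
    by (intro mult_mono e_le power_mono q) auto
  also have "\<dots> \<le> 645/100" by (simp add: power_divide)
  finally show ?thesis .
qed

lemma numeric:
  fixes d s b :: nat and lam eps T a2 c :: real
  assumes d1: "1 \<le> d" and lam1: "1 / real d \<le> lam" and lam2: "lam \<le> 1"
    and eps: "0 < eps" and epsb: "eps^2 \<le> 1/16 * sqrt (real d / lam)"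
    and T: "T = 21/20 * eps^2" and s: "s = nat \<lfloor>T\<rfloor> + 1" and b: "b = d div s"
    and a2: "a2 = T / real s" and c: "c = lam * (exp a2 - 1)"
  shows "1 \<le> b" "s * b \<le> d" "1 \<le> s" "0 < a2" "a2 \<le> 1" "eps^2 < real s * a2"
    "(1 + (exp c - 1) / real b) ^ s \<le> 5/4"
proof -
  have dpos: "0 < real d" using d1 by simp
  have "0 < 1 / real d" using dpos by simp
  then have lampos: "0 < lam" using lam1 by linarith
  have invl: "1 / lam \<le> real d" using lam1 lampos dpos by (simp add: field_simps)
  have sq1: "sqrt (real d / lam) \<le> real d"
  proof -
    have "real d / lam \<le> real d * real d"
      using invl dpos by (simp add: divide_inverse mult_left_mono)
    then have "sqrt (real d / lam) \<le> sqrt (real d * real d)" by (rule real_sqrt_le_mono)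
    then show ?thesis using dpos by simp
  qed
  have e2d: "eps^2 \<le> real d / 16" using epsb sq1 by simp
  have Tpos: "0 < T" unfolding T using eps by simp
  have Td: "T \<le> 21/320 * real d" using T e2d by simp
  have sT: "real s = of_int \<lfloor>T\<rfloor> + 1" using s Tpos by simp
  have sgt: "T < real s" using sT by linarith
  have sle: "real s \<le> T + 1" using sT by linarith
  show s1: "1 \<le> s" using s by simp
  have spos: "0 < real s" using s1 by simp
  have fl: "\<lfloor>T\<rfloor> < int d" using Td dpos by linarith
  have sd: "s \<le> d" using s fl Tpos by linarith
  show "1 \<le> b" using sd s1 b by (simp add: div_greater_zero_iff Suc_le_eq)
  show "s * b \<le> d" unfolding b using mult_div_mod_eq[of s d] by linarith
  show a2p: "0 < a2" using a2 Tpos spos by simp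
  show a21: "a2 \<le> 1" using a2 sgt spos by simp
  show "eps^2 < real s * a2" using a2 spos T eps by simp
  have ea0: "exp (a2*1) - 1 \<le> a2 * (exp 1 - 1)"
    by (rule exp_convex_bound) (use a2p a21 in auto)
  have "a2 * (exp 1 - 1) \<le> a2 * (272/100 - 1)"
    by (rule mult_left_mono) (use e_le a2p in auto)
  then have ea: "exp a2 - 1 \<le> a2 * (172/100)" using ea0 by simp
  have c0: "0 \<le> c" using c lampos a2p by simp
  have cle: "c \<le> lam * a2 * (172/100)"
    unfolding c using mult_left_mono[OF ea, of lam] lampos by (simp add: mult.assoc)
  have la1: "lam * a2 \<le> 1" using mult_le_one[of lam a2] lam2 a21 a2p lampos by simp
  have la2: "lam * a2 \<le> lam" using mult_left_mono[OF a21, of lam] lampos by simp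
  have "(1 + (exp c - 1) / real b) ^ s \<le> 5/4"
  proof (cases "T < 1")
    case True
    then have s1': "s = 1" using s Tpos by (simp add: floor_less_iff)
    then have bd: "b = d" using b by simp
    have a2T: "a2 = T" using a2 s1' by simp
    have sqdl: "lam * sqrt (real d / lam) = sqrt (real d * lam)"
    proof -
      have "lam * sqrt (real d / lam) = sqrt (lam^2) * sqrt (real d / lam)" using lampos by simp
      also have "\<dots> = sqrt (lam^2 * (real d / lam))" by (simp only: real_sqrt_mult)
      also have "lam^2 * (real d / lam) = real d * lam" using lampos by (simp add: power2_eq_square field_simps)
      finally show ?thesis .
    qed
    have sdl: "sqrt (real d * lam) \<le> sqrt (real d)"
      using lam2 dpos by (intro real_sqrt_le_mono) (simp add: mult_left_le)
    have "lam * eps^2 \<le> lam * (1/16 * sqrt (real d / lam))" using epsb lampos by (simp add: mult_left_mono)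
    moreover have "lam * (1/16 * sqrt (real d / lam)) = sqrt (real d * lam) / 16" using sqdl by simp
    ultimately have le2: "lam * eps^2 \<le> sqrt (real d) / 16" using sdl by linarith
    have "lam * a2 * (172/100) = 1806/1000 * (lam * eps^2)" using a2T T by simp
    then have e1: "c \<le> 1806/1000 * (lam * eps^2)" using cle by linarith
    have cb: "c \<le> 1806/1000 * sqrt (real d) / 16" using e1 le2 by linarith
    have sd1: "1 \<le> sqrt (real d)" using d1 by simp
    have "sqrt (real d) \<le> sqrt (real d * real d)" using d1 by (intro real_sqrt_le_mono) simp
    then have sdd: "sqrt (real d) \<le> real d" using dpos by simp
    have key: "exp c - 1 \<le> real d / 4"
    proof (cases "c \<le> 1")
      case True
      have "exp (c*1) - 1 \<le> c * (exp 1 - 1)"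
        by (rule exp_convex_bound) (use c0 True in auto)
      also have "\<dots> \<le> c * (272/100 - 1)"
        by (rule mult_left_mono) (use e_le c0 in auto)
      finally have "exp c - 1 \<le> c * (172/100)" by simp
      also have "\<dots> \<le> 172/100 * (1806/1000 * sqrt (real d) / 16)" using cb by simp
      also have "\<dots> \<le> real d / 4" using sdd sd1 by simp
      finally show ?thesis .
    next
      case False
      then have "16 / (1806/1000) < sqrt (real d)" using cb by (simp add: field_simps)
      then have "(16 / (1806/1000))^2 < (sqrt (real d))^2" by (intro power_strict_mono) auto
      moreover have "(78::real) \<le> (16 / (1806/1000))^2" by (simp add: power_divide)
      ultimately have dbig: "78 < real d" by simp
      have "c \<le> 2" using cle la1 by simp
      then have "exp c \<le> exp 2" by simp
      also have "exp (2::real) = exp 1 ^ 2" by (simp add: exp_of_nat_mult[symmetric])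
      also have "\<dots> \<le> (272/100)^2" by (intro power_mono e_le) simp
      finally have "exp c \<le> (272/100::real)^2" .
      moreover have "(272/100::real)^2 \<le> 8" by (simp add: power_divide)
      ultimately show ?thesis using dbig by linarith
    qed
    show ?thesis using key bd s1' dpos by (simp add: field_simps)
  next
    case False
    then have T1: "1 \<le> T" by simp
    have s2T: "real s \<le> 2 * T" using sle T1 by simp
    have sd2: "2 * real s \<le> real d" using s2T Td by simp
    have bs: "real d \<le> 2 * real s * real b"
    proof -
      have "d = s * b + d mod s" using b by simp
      moreover have "d mod s < s" using s1 by simp
      ultimately have "real d < real s * real b + real s"
        by (metis of_nat_add of_nat_less_iff of_nat_mult add_less_cancel_left)
      then show ?thesis using sd2 by simp
    qed
    have bpos: "0 < real b" using bs dpos by (cases "b = 0") auto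
    have ec: "exp c - 1 \<le> lam * (645/100 - 1)"
    proof -
      have "c \<le> lam * (7/4)" using cle la2 lampos by linarith
      then have "exp c - 1 \<le> exp (lam * (7/4)) - 1" by simp
      also have "\<dots> \<le> lam * (exp (7/4) - 1)" by (rule exp_convex_bound) (use lampos lam2 in auto)
      also have "\<dots> \<le> lam * (645/100 - 1)" using exp_74 lampos by (simp add: mult_left_mono)
      finally show ?thesis .
    qed
    have e4: "eps^4 \<le> real d / lam / 256"
    proof -
      have "(eps^2)^2 \<le> (1/16 * sqrt (real d / lam))^2"
        using epsb eps by (intro power_mono) auto
      then show ?thesis using lampos dpos by (simp add: power2_eq_square power4_eq_xxxx mult.assoc)
    qed
    have ss: "real s ^ 2 \<le> 4 * (441/400) * (real d / lam / 256)"
    proof -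
      have "real s ^ 2 \<le> (2*T)^2" using s2T spos by (intro power_mono) auto
      also have "\<dots> = 4 * (441/400) * eps^4" unfolding T by (simp add: power2_eq_square power4_eq_xxxx algebra_simps)
      also have "\<dots> \<le> 4 * (441/400) * (real d / lam / 256)" using e4 by simp
      finally show ?thesis .
    qed
    define u where "u = (exp c - 1) / real b"
    have u0: "0 \<le> u" unfolding u_def using c0 bpos by simp
    have su: "real s * u \<le> 1/5"
    proof -
      have "real s * u = real s * (exp c - 1) / real b" unfolding u_def by simp
      also have "\<dots> \<le> real s * (exp c - 1) * (2 * real s / real d)"
      proof -
        have "1 / real b \<le> 2 * real s / real d" using bs bpos dpos by (simp add: field_simps)
        moreover have "0 \<le> real s * (exp c - 1)" using c0 by simp
        ultimately show ?thesis by (metis mult_left_mono times_divide_eq_right mult.right_neutral)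
      qed
      also have "\<dots> = 2 * real s ^ 2 * (exp c - 1) / real d" by (simp add: power2_eq_square)
      also have "\<dots> \<le> 2 * (4 * (441/400) * (real d / lam / 256)) * (lam * (645/100 - 1)) / real d"
        using ss ec c0 dpos lampos by (intro divide_right_mono mult_mono) auto
      also have "\<dots> = 2 * 4 * (441/400) * (645/100 - 1) / 256"
        using lampos dpos by (simp add: field_simps)
      also have "\<dots> \<le> 1/5" by simp
      finally show ?thesis .
    qed
    have "(1 + u) ^ s \<le> exp u ^ s" using u0 by (intro power_mono) auto
    also have "\<dots> = exp (real s * u)" by (simp add: exp_of_nat_mult)
    also have "\<dots> \<le> exp (1/5)" using su by simp
    also have "\<dots> \<le> 5/4" using exp_le_inv[of "1/5"] by simp
    finally show ?thesis unfolding u_def .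
  qed
  then show "(1 + (exp c - 1) / real b) ^ s \<le> 5/4" .
qed

lemma blk_div: "t < b \<Longrightarrow> (j*b + t) div b = (j::nat)"
  by (rule div_nat_eqI) (auto simp: algebra_simps)

lemma blk_mod: "t < b \<Longrightarrow> (j*b + t) mod b = (t::nat)"
proof -
  assume "t < b"
  then have "(j*b + t) div b = j" by (rule blk_div)
  then show ?thesis using div_mult_mod_eq[of "j*b + t" b] by simp
qed

lemma blk_image:
  assumes "s*b \<le> d" "0 < b" "\<And>j. j < s \<Longrightarrow> r j < (b::nat)"
  shows "inj_on (\<lambda>j. j*b + r j) {..<s}" "(\<lambda>j. j*b + r j) ` {..<s} \<subseteq> {..<d}"
    "\<And>k. k \<in> {..<d} - (\<lambda>j. j*b + r j) ` {..<s} \<Longrightarrow> \<not> (k div b < s \<and> k mod b = r (k div b))"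
proof -
  show "inj_on (\<lambda>j. j*b + r j) {..<s}"
  proof (rule inj_onI)
    fix x y assume x: "x \<in> {..<s}" and y: "y \<in> {..<s}" and e: "x*b + r x = y*b + r y"
    have "x = (x*b + r x) div b" using assms(3) x by (simp add: blk_div)
    also have "\<dots> = (y*b + r y) div b" using e by simp
    also have "\<dots> = y" using assms(3) y by (simp add: blk_div)
    finally show "x = y" .
  qed
  show "(\<lambda>j. j*b + r j) ` {..<s} \<subseteq> {..<d}"
  proof
    fix k assume "k \<in> (\<lambda>j. j*b + r j) ` {..<s}"
    then obtain j where j: "j < s" "k = j*b + r j" by auto
    have "j*b + r j < j*b + b" using assms(3) j by simp
    also have "\<dots> = Suc j * b" by simp
    also have "\<dots> \<le> s * b" using j by (intro mult_le_mono1) simp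
    finally show "k \<in> {..<d}" using j assms(1) by simp
  qed
  fix k assume k: "k \<in> {..<d} - (\<lambda>j. j*b + r j) ` {..<s}"
  show "\<not> (k div b < s \<and> k mod b = r (k div b))"
  proof
    assume c: "k div b < s \<and> k mod b = r (k div b)"
    have "k = (k div b) * b + r (k div b)" using c div_mult_mod_eq[of k b] by simp
    then have "k \<in> (\<lambda>j. j*b + r j) ` {..<s}" using c by auto
    then show False using k by simp
  qed
qed

lemma block_prod:
  fixes G :: "nat \<Rightarrow> 'a::comm_monoid_mult"
  assumes "s*b \<le> d" "0 < b" "\<And>j. j < s \<Longrightarrow> r j < b"
    and "\<And>k. k < d \<Longrightarrow> \<not> (k div b < s \<and> k mod b = r (k div b)) \<Longrightarrow> G k = 1"
  shows "(\<Prod>k<d. G k) = (\<Prod>j<s. G (j*b + r j))"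
proof -
  note bi = blk_image[where s=s and b=b and d=d and r=r, OF assms(1-3)]
  have "(\<Prod>k<d. G k) = (\<Prod>k\<in>(\<lambda>j. j*b + r j) ` {..<s}. G k)"
  proof (rule prod.mono_neutral_right)
    show "(\<lambda>j. j*b + r j) ` {..<s} \<subseteq> {..<d}" by (rule bi(2))
    show "\<forall>i\<in>{..<d} - (\<lambda>j. j*b + r j) ` {..<s}. G i = 1"
    proof
      fix i assume i: "i \<in> {..<d} - (\<lambda>j. j*b + r j) ` {..<s}"
      show "G i = 1"
      proof (rule assms(4))
        show "i < d" using i by simp
        show "\<not> (i div b < s \<and> i mod b = r (i div b))"
        proof
          assume c: "i div b < s \<and> i mod b = r (i div b)"
          have "i = (i div b) * b + r (i div b)" using c div_mult_mod_eq[of i b] by simp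
          then have "i \<in> (\<lambda>j. j*b + r j) ` {..<s}" using c by (intro rev_image_eqI[of "i div b"]) auto
          then show False using i by simp
        qed
      qed
    qed
  qed simp
  also have "\<dots> = (\<Prod>j<s. G (j*b + r j))"
    by (simp add: prod.reindex[OF bi(1)])
  finally show ?thesis .
qed

lemma block_sum:
  fixes G :: "nat \<Rightarrow> 'a::comm_monoid_add"
  assumes "s*b \<le> d" "0 < b" "\<And>j. j < s \<Longrightarrow> r j < b"
    and "\<And>k. k < d \<Longrightarrow> \<not> (k div b < s \<and> k mod b = r (k div b)) \<Longrightarrow> G k = 0"
  shows "(\<Sum>k<d. G k) = (\<Sum>j<s. G (j*b + r j))"
proof -
  note bi = blk_image[where s=s and b=b and d=d and r=r, OF assms(1-3)]
  have "(\<Sum>k<d. G k) = (\<Sum>k\<in>(\<lambda>j. j*b + r j) ` {..<s}. G k)"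
  proof (rule sum.mono_neutral_right)
    show "(\<lambda>j. j*b + r j) ` {..<s} \<subseteq> {..<d}" by (rule bi(2))
    show "\<forall>i\<in>{..<d} - (\<lambda>j. j*b + r j) ` {..<s}. G i = 0"
    proof
      fix i assume i: "i \<in> {..<d} - (\<lambda>j. j*b + r j) ` {..<s}"
      show "G i = 0"
      proof (rule assms(4))
        show "i < d" using i by simp
        show "\<not> (i div b < s \<and> i mod b = r (i div b))"
        proof
          assume c: "i div b < s \<and> i mod b = r (i div b)"
          have "i = (i div b) * b + r (i div b)" using c div_mult_mod_eq[of i b] by simp
          then have "i \<in> (\<lambda>j. j*b + r j) ` {..<s}" using c by (intro rev_image_eqI[of "i div b"]) auto
          then show False using i by simp
        qed
      qed
    qed
  qed simp
  also have "\<dots> = (\<Sum>j<s. G (j*b + r j))"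
    by (simp add: sum.reindex[OF bi(1)])
  finally show ?thesis .
qed

lemma double_sum_PiE:
  fixes E :: real and b s :: nat
  shows "(\<Sum>r\<in>Pi\<^sub>E {..<s} (\<lambda>_. {..<b}). \<Sum>r'\<in>Pi\<^sub>E {..<s} (\<lambda>_. {..<b}). \<Prod>j<s. (if r j = r' j then E else 1))
     = (real b * (E + real b - 1)) ^ s"
proof -
  have inner: "(\<Sum>v<b. (if u = v then E else 1)) = E + real b - 1" if "u < b" for u
  proof -
    have "(\<Sum>v<b. (if u = v then E else 1)) = (\<Sum>v<b. 1 + (if u = v then E - 1 else 0))"
      by (rule sum.cong) auto
    also have "\<dots> = real b + (E - 1)" using that by (simp add: sum.distrib)
    finally show ?thesis by simp
  qed
  have "(real b * (E + real b - 1)) ^ s = (\<Prod>j<s. \<Sum>u<b. \<Sum>v<b. (if u = v then E else 1))"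
    by (simp add: inner)
  also have "\<dots> = (\<Sum>r\<in>Pi\<^sub>E {..<s} (\<lambda>_. {..<b}). \<Prod>j<s. \<Sum>v<b. (if r j = v then E else 1))"
    by (rule prod_sum_PiE) auto
  also have "\<dots> = (\<Sum>r\<in>Pi\<^sub>E {..<s} (\<lambda>_. {..<b}). \<Sum>r'\<in>Pi\<^sub>E {..<s} (\<lambda>_. {..<b}). \<Prod>j<s. (if r j = r' j then E else 1))"
    by (rule sum.cong[OF refl]) (rule prod_sum_PiE, auto)
  finally show ?thesis by simp
qed

lemma sum_inner_simp:
  fixes E :: real
  assumes "u < b"
  shows "(\<Sum>v<b. (if u = v then E else 1)) = real b * 1 + (E - 1)"
proof -
  have "(\<Sum>v<b. (if u = v then E else 1)) = (\<Sum>v<b. 1 + (if u = v then E - 1 else 0))"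
    by (rule sum.cong) auto
  also have "\<dots> = real b + (E - 1)" using assms by (simp add: sum.distrib)
  finally show ?thesis by simp
qed

lemma chi_formula:
  fixes \<theta> :: "'f \<Rightarrow> real ^ 'n::finite"
  assumes lam: "0 < lam" and F: "finite F"
  shows "(\<integral>\<^sup>+y. ennreal ((\<Sum>f\<in>F. LR (\<theta> f) y / card F)^2) \<partial>obs lam 0)
     = ennreal ((\<Sum>f\<in>F. \<Sum>g\<in>F. (\<Prod>i\<in>UNIV. exp (lam * (exp (\<theta> f $ i * \<theta> g $ i) - 1)))) / (real (card F))^2)"
proof -
  let ?m = "real (card F)"
  have m: "LR (\<theta> f) \<in> borel_measurable (obs lam (0::real^'n))" for f by (rule LR_meas)
  have pw: "ennreal ((\<Sum>f\<in>F. LR (\<theta> f) y / card F)^2) = (\<Sum>f\<in>F. \<Sum>g\<in>F. ennreal (1 / ?m^2) * ennreal (LR (\<theta> f) y * LR (\<theta> g) y))" for y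
  proof -
    have "(\<Sum>f\<in>F. LR (\<theta> f) y / card F)^2 = (\<Sum>f\<in>F. \<Sum>g\<in>F. (1 / ?m^2) * (LR (\<theta> f) y * LR (\<theta> g) y))"
      by (simp add: power2_eq_square sum_product sum_divide_distrib[symmetric] field_simps)
    then have "ennreal ((\<Sum>f\<in>F. LR (\<theta> f) y / card F)^2) = (\<Sum>f\<in>F. \<Sum>g\<in>F. ennreal ((1 / ?m^2) * (LR (\<theta> f) y * LR (\<theta> g) y)))"
      by (simp add: sum_ennreal LR_nonneg sum_nonneg)
    also have "\<dots> = (\<Sum>f\<in>F. \<Sum>g\<in>F. ennreal (1 / ?m^2) * ennreal (LR (\<theta> f) y * LR (\<theta> g) y))"
      by (intro sum.cong refl, rule ennreal_mult) (simp_all add: LR_nonneg)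
    finally show ?thesis .
  qed
  have "(\<integral>\<^sup>+y. ennreal ((\<Sum>f\<in>F. LR (\<theta> f) y / card F)^2) \<partial>obs lam 0)
      = (\<integral>\<^sup>+y. (\<Sum>f\<in>F. \<Sum>g\<in>F. ennreal (1 / ?m^2) * ennreal (LR (\<theta> f) y * LR (\<theta> g) y)) \<partial>obs lam 0)"
    by (simp only: pw)
  also have "\<dots> = (\<Sum>f\<in>F. \<integral>\<^sup>+y. (\<Sum>g\<in>F. ennreal (1 / ?m^2) * ennreal (LR (\<theta> f) y * LR (\<theta> g) y)) \<partial>obs lam 0)"
    by (rule nn_integral_sum) (use m in measurable)
  also have "\<dots> = (\<Sum>f\<in>F. \<Sum>g\<in>F. \<integral>\<^sup>+y. ennreal (1 / ?m^2) * ennreal (LR (\<theta> f) y * LR (\<theta> g) y) \<partial>obs lam 0)"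
    by (rule sum.cong[OF refl], rule nn_integral_sum) (use m in measurable)
  also have "\<dots> = (\<Sum>f\<in>F. \<Sum>g\<in>F. ennreal (1 / ?m^2) * ennreal (\<Prod>i\<in>UNIV. exp (lam * (exp (\<theta> f $ i * \<theta> g $ i) - 1))))"
    by (intro sum.cong refl) (simp add: nn_integral_cmult int_P[OF lam] m)
  also have "\<dots> = ennreal ((\<Sum>f\<in>F. \<Sum>g\<in>F. (\<Prod>i\<in>UNIV. exp (lam * (exp (\<theta> f $ i * \<theta> g $ i) - 1)))) / ?m^2)"
    by (simp add: ennreal_mult[symmetric] sum_ennreal prod_nonneg sum_nonneg sum_divide_distrib field_simps)
  finally show ?thesis .
qed

lemma test_facts:
  fixes \<psi> :: "('n::finite \<Rightarrow> nat \<times> (nat \<Rightarrow> real)) \<Rightarrow> real" and \<theta> :: "real ^ 'n"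
  assumes lam: "0 < lam" and t: "is_test \<psi>"
  shows "0 \<le> (\<integral>y. \<psi> y \<partial>obs lam \<theta>)" "(\<integral>y. 1 - \<psi> y \<partial>obs lam \<theta>) = 1 - (\<integral>y. \<psi> y \<partial>obs lam \<theta>)"
proof -
  interpret P: prob_space "obs lam \<theta>" by (rule obs_prob[OF lam])
  have psim: "\<psi> \<in> borel_measurable (obs lam \<theta>)"
    using t unfolding is_test_def by (simp only: measurable_cong_sets[OF obs_sets refl])
  have b: "0 \<le> \<psi> y \<and> \<psi> y \<le> 1" for y using t unfolding is_test_def by (cases "\<psi> y = 0") auto
  have pi: "integrable (obs lam \<theta>) \<psi>"
    by (rule P.integrable_const_bound[where B=1]) (use b psim in auto)
  show "0 \<le> (\<integral>y. \<psi> y \<partial>obs lam \<theta>)" by (rule integral_nonneg_AE) (use b in auto)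
  show "(\<integral>y. 1 - \<psi> y \<partial>obs lam \<theta>) = 1 - (\<integral>y. \<psi> y \<partial>obs lam \<theta>)"
    using pi by (simp add: P.prob_space)
qed

theorem proposition2:
  fixes lam \<epsilon> :: real
  assumes "1 / real CARD('n::finite) \<le> lam" and "lam \<le> 1"
    and "\<epsilon> > 0"
    and "\<epsilon>^2 \<le> 1/16 * sqrt (real CARD('n) / lam)"
  shows "minimax_risk lam ({0} :: (real ^ 'n) set) {\<theta>. \<forall>i. \<theta> $ i \<ge> 0} \<epsilon> \<ge> 1/2"
proof -
  define d where "d = CARD('n)"
  have d1: "1 \<le> d" unfolding d_def by (simp add: Suc_le_eq)
  have dpos: "0 < real d" using d1 by simp
  have lampos: "0 < lam"
  proof -
    have "0 < 1 / real d" using dpos by simp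
    then show ?thesis using assms(1) unfolding d_def by linarith
  qed
  define T where "T = 21/20 * \<epsilon>^2"
  define s where "s = nat \<lfloor>T\<rfloor> + 1"
  define b where "b = d div s"
  define a2 where "a2 = T / real s"
  define c where "c = lam * (exp a2 - 1)"
  note num = numeric[OF d1 assms(1)[folded d_def] assms(2,3) assms(4)[folded d_def] T_def s_def b_def a2_def c_def]
  have b1: "1 \<le> b" and sbd: "s * b \<le> d" and s1: "1 \<le> s" and a2p: "0 < a2"
    and norm_gt: "\<epsilon>^2 < real s * a2" and chib: "(1 + (exp c - 1) / real b) ^ s \<le> 5/4"
    using num by auto
  have bpos: "0 < b" using b1 by simp
  obtain h where h: "bij_betw h {0..<d} (UNIV :: 'n set)"
    using ex_bij_betw_nat_finite[of "UNIV :: 'n set"] unfolding d_def by auto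
  define hinv where "hinv = inv_into {0..<d} h"
  have hinv1: "hinv i < d" for i
  proof -
    have "i \<in> h ` {0..<d}" using bij_betw_imp_surj_on[OF h] by simp
    then have "hinv i \<in> {0..<d}" unfolding hinv_def by (rule inv_into_into)
    then show ?thesis by simp
  qed
  have hinv2: "hinv (h k) = k" if "k < d" for k
    unfolding hinv_def using bij_betw_imp_inj_on[OF h] that by (intro inv_into_f_f) auto
  define a where "a = sqrt a2"
  have aa: "a * a = a2" unfolding a_def using a2p by simp
  have a0: "0 \<le> a" unfolding a_def using a2p by simp
  define F where "F = Pi\<^sub>E {..<s} (\<lambda>_. {..<b})"
  have Ffin: "finite F" unfolding F_def by (simp add: finite_PiE)
  have Fne: "F \<noteq> {}" unfolding F_def using bpos by (auto simp: PiE_eq_empty_iff lessThan_empty_iff)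
  have Fcard: "card F = b ^ s" unfolding F_def by (simp add: card_PiE)
  have Fr: "r j < b" if "r \<in> F" "j < s" for r j using that unfolding F_def by auto
  define th' where "th' r k = (if k div b < s \<and> k mod b = r (k div b) then a else 0)" for r :: "nat \<Rightarrow> nat" and k :: nat
  define th where "th r = ((\<chi> i. th' r (hinv i)) :: real ^ 'n)" for r
  have thh: "th r $ h k = th' r k" if "k < d" for r k
    unfolding th_def using hinv2[OF that] by simp
  have th'_blk: "th' r' (j*b + r j) = (if r j = r' j then a else 0)" if "r \<in> F" "j < s" for r r' j
    unfolding th'_def using Fr[OF that] that(2) by (simp add: blk_div blk_mod)
  have th'_self: "th' r (j*b + r j) = a" if "r \<in> F" "j < s" for r j
    using th'_blk[OF that, of r] by simp
  have inA: "th r \<in> {\<theta>. \<forall>i. \<theta> $ i \<ge> 0} - enlarge {0} \<epsilon>" if r: "r \<in> F" for r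
  proof -
    have "(\<Sum>i\<in>UNIV. (th r $ i)^2) = (\<Sum>k\<in>{0..<d}. (th r $ h k)^2)"
      by (rule sum.reindex_bij_betw[OF h, symmetric])
    also have "\<dots> = (\<Sum>k<d. (th' r k)^2)" by (simp add: thh atLeast0LessThan)
    also have "\<dots> = (\<Sum>j<s. (th' r (j*b + r j))^2)"
      by (rule block_sum[OF sbd bpos]) (auto simp: Fr[OF r] th'_def)
    also have "\<dots> = real s * a2" using th'_self[OF r] aa by (simp add: power2_eq_square)
    finally have sq: "(\<Sum>i\<in>UNIV. (th r $ i)^2) = real s * a2" .
    have "norm (th r) = sqrt (\<Sum>i\<in>UNIV. (th r $ i)^2)"
      by (simp add: norm_vec_def L2_set_def)
    also have "\<dots> = sqrt (real s * a2)" using sq by simp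
    finally have nr: "norm (th r) = sqrt (real s * a2)" .
    have "sqrt (\<epsilon>^2) < sqrt (real s * a2)" by (rule real_sqrt_less_mono[OF norm_gt])
    then have "\<epsilon> < norm (th r)" using assms(3) nr by simp
    then have "th r \<notin> enlarge {0} \<epsilon>" unfolding enlarge_def by simp
    moreover have "\<forall>i. th r $ i \<ge> 0" unfolding th_def th'_def using a0 by simp
    ultimately show ?thesis by simp
  qed
  have prodeq: "(\<Prod>i\<in>UNIV. exp (lam * (exp (th r $ i * th r' $ i) - 1))) = (\<Prod>j<s. (if r j = r' j then exp c else 1))"
    if r: "r \<in> F" and r': "r' \<in> F" for r r'
  proof -
    have "(\<Prod>i\<in>UNIV. exp (lam * (exp (th r $ i * th r' $ i) - 1))) = (\<Prod>k\<in>{0..<d}. exp (lam * (exp (th r $ h k * th r' $ h k) - 1)))"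
      by (rule prod.reindex_bij_betw[OF h, symmetric])
    also have "\<dots> = (\<Prod>k<d. exp (lam * (exp (th' r k * th' r' k) - 1)))" by (simp add: thh atLeast0LessThan)
    also have "\<dots> = (\<Prod>j<s. exp (lam * (exp (th' r (j*b + r j) * th' r' (j*b + r j)) - 1)))"
      by (rule block_prod[OF sbd bpos]) (auto simp: Fr[OF r] th'_def)
    also have "\<dots> = (\<Prod>j<s. (if r j = r' j then exp c else 1))"
      by (rule prod.cong[OF refl]) (simp add: th'_blk[OF r] th'_self[OF r] aa c_def)
    finally show ?thesis .
  qed
  have chi: "(\<integral>\<^sup>+y. ennreal ((\<Sum>f\<in>F. LR (th f) y / card F)^2) \<partial>obs lam 0) \<le> ennreal (5/4)"
  proof -
    have "(\<Sum>f\<in>F. \<Sum>g\<in>F. (\<Prod>i\<in>UNIV. exp (lam * (exp (th f $ i * th g $ i) - 1))))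
        = (\<Sum>f\<in>F. \<Sum>g\<in>F. (\<Prod>j<s. (if f j = g j then exp c else 1)))"
      by (intro sum.cong refl) (simp add: prodeq)
    also have "\<dots> = (real b * (exp c + real b - 1)) ^ s"
      unfolding F_def by (rule double_sum_PiE)
    finally have ss: "(\<Sum>f\<in>F. \<Sum>g\<in>F. (\<Prod>i\<in>UNIV. exp (lam * (exp (th f $ i * th g $ i) - 1)))) = (real b * (exp c + real b - 1)) ^ s" .
    have "(real b * (exp c + real b - 1)) ^ s / (real (card F))^2 = (1 + (exp c - 1) / real b) ^ s"
    proof -
      have "(real b * (exp c + real b - 1)) ^ s / (real (card F))^2 = (real b ^ s * (exp c + real b - 1) ^ s) / (real b ^ s * real b ^ s)"
        by (simp add: Fcard power_mult_distrib power2_eq_square)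
      also have "\<dots> = (exp c + real b - 1) ^ s / real b ^ s" using bpos by simp
      also have "\<dots> = ((exp c + real b - 1) / real b) ^ s" by (simp add: power_divide)
      also have "(exp c + real b - 1) / real b = 1 + (exp c - 1) / real b" using bpos by (simp add: field_simps)
      finally show ?thesis .
    qed
    then have "(\<Sum>f\<in>F. \<Sum>g\<in>F. (\<Prod>i\<in>UNIV. exp (lam * (exp (th f $ i * th g $ i) - 1)))) / (real (card F))^2 \<le> 5/4"
      using ss chib by simp
    then show ?thesis
      unfolding chi_formula[OF lampos Ffin, of th] by (rule ennreal_leI)
  qed
  show ?thesis unfolding minimax_risk_def
  proof (rule cINF_greatest)
    have "is_test (\<lambda>_. 0 :: real)" unfolding is_test_def by simp
    then show "{\<psi>. is_test \<psi>} \<noteq> ({} :: (('n \<Rightarrow> nat \<times> (nat \<Rightarrow> real)) \<Rightarrow> real) set)" by blast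
  next
    fix \<psi> :: "('n \<Rightarrow> nat \<times> (nat \<Rightarrow> real)) \<Rightarrow> real"
    assume "\<psi> \<in> {\<psi>. is_test \<psi>}"
    then have t: "is_test \<psi>" by simp
    have psim: "\<psi> \<in> borel_measurable obs_space" using t unfolding is_test_def by simp
    have b01: "0 \<le> \<psi> y" "\<psi> y \<le> 1" for y using t unfolding is_test_def by (cases "\<psi> y = 0"; auto)+
    let ?A = "{\<theta>. \<forall>i. \<theta> $ i \<ge> 0} - enlarge {0} \<epsilon> :: (real ^ 'n) set"
    let ?S = "SUP \<theta>\<in>?A. (\<integral>y. 1 - \<psi> y \<partial>obs lam \<theta>)"
    have bdd: "bdd_above ((\<lambda>\<theta>. (\<integral>y. 1 - \<psi> y \<partial>obs lam \<theta>)) ` ?A)"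
    proof (rule bdd_aboveI)
      fix x assume "x \<in> (\<lambda>\<theta>. (\<integral>y. 1 - \<psi> y \<partial>obs lam \<theta>)) ` ?A"
      then obtain \<theta> where "x = (\<integral>y. 1 - \<psi> y \<partial>obs lam \<theta>)" by auto
      then show "x \<le> 1" using test_facts[OF lampos t, of \<theta>] by simp
    qed
    have each: "1 - (\<integral>y. \<psi> y \<partial>obs lam (th r)) \<le> ?S" if "r \<in> F" for r
      using cSUP_upper[OF inA[OF that] bdd] test_facts[OF lampos t, of "th r"] by simp
    have "(\<Sum>r\<in>F. (1 - (\<integral>y. \<psi> y \<partial>obs lam (th r))) / card F) \<le> (\<Sum>r\<in>F. ?S / card F)"
      using each by (intro sum_mono divide_right_mono) auto
    also have "\<dots> = ?S" using Ffin Fne by simp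
    finally have avg: "(\<Sum>r\<in>F. (1 - (\<integral>y. \<psi> y \<partial>obs lam (th r))) / card F) \<le> ?S" .
    have "(\<Sum>r\<in>F. (1 - (\<integral>y. \<psi> y \<partial>obs lam (th r))) / card F) = 1 - (\<Sum>r\<in>F. (\<integral>y. \<psi> y \<partial>obs lam (th r)) / card F)"
      using Ffin Fne by (simp add: sum_subtractf diff_divide_distrib sum_divide_distrib[symmetric])
    moreover have "(\<Sum>r\<in>F. (\<integral>y. \<psi> y \<partial>obs lam (th r)) / card F) \<le> (\<integral>y. \<psi> y \<partial>obs lam 0) + 1/2"
      by (rule test_bound[OF lampos Ffin Fne psim b01 chi])
    ultimately have "1/2 \<le> (\<integral>y. \<psi> y \<partial>obs lam 0) + ?S" using avg by linarith
    then show "1/2 \<le> test_risk lam \<psi> {0} {\<theta>. \<forall>i. \<theta> $ i \<ge> 0} \<epsilon>"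
      unfolding test_risk_def by simp
  qed
qed

end
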